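(* Assume (A1)–(A4) and $(RC_+)$. Let $\pi^+:=\mathbf{1}_{R^+}$, $f(x,y):=\log\big((1-\pi^+(x))+\pi^+(x)e^{y-x}\big)$, and let $\nu$ be the invariant probability measure of $\Phi_t$, which is equivalent to $\lambda_2$. Then $\nu(f)=\int_{\mathbb{R}^2}f\,d\nu>0$.
   Context: Setting: $\mu,\sigma:\mathbb{R}\to\mathbb{R}$ measurable, $(\varepsilon_t)_{t\ge1}$ i.i.d., $X_0$ constant, $X_t=X_{t-1}+\mu(X_{t-1})+\sigma(X_{t-1})\varepsilon_t$; $X_{-1}$ arbitrary constant, $\Phi_t=(X_{t-1},X_t)$; $\lambda,\lambda_2$ Lebesgue measure on $\mathbb{R},\mathbb{R}^2$. (A1) $\varepsilon_1$ has a density w.r.t. $\lambda$, bounded and bounded away from $0$ on compacts; (A2) $\mu$ locally bounded, $\sigma$ positive, bounded away from $0$ on compacts, globally bounded; (A3) $\limsup_{|x|\to\infty}|x+\mu(x)|/|x|<1$; (A4) $\mathbb{E}e^{\kappa\varepsilon_1^2}<\infty$ for some $\kappa>0$, $\mathbb{E}\varepsilon_1=0$. $(RC_+)$: $R^+:=\{x:\mu(x)>0\}$ satisfies $\lambda(R^+)>0$. *)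

theory Defs
  imports "HOL-Probability.Probability"
begin

text \<open>Transition kernel of the chain Phi_t = (X_{t-1}, X_t), where
  X_t = X_{t-1} + mu(X_{t-1}) + sigma(X_{t-1}) * eps_t and eps_t has law E.\<close>
definition phi_kernel ::
  "(real \<Rightarrow> real) \<Rightarrow> (real \<Rightarrow> real) \<Rightarrow> real measure \<Rightarrow> real \<times> real \<Rightarrow> (real \<times> real) set \<Rightarrow> ennreal" where
  "phi_kernel \<mu> \<sigma> E z A =
     emeasure E {e \<in> space E. (snd z, snd z + \<mu> (snd z) + \<sigma> (snd z) * e) \<in> A}"

definition phi_invariant ::
  "(real \<Rightarrow> real) \<Rightarrow> (real \<Rightarrow> real) \<Rightarrow> real measure \<Rightarrow> (real \<times> real) measure \<Rightarrow> bool" where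
  "phi_invariant \<mu> \<sigma> E \<nu> \<longleftrightarrow>
     prob_space \<nu> \<and> sets \<nu> = sets (borel :: (real \<times> real) measure) \<and>
     (\<forall>A \<in> sets (borel :: (real \<times> real) measure).
        emeasure \<nu> A = (\<integral>\<^sup>+ z. phi_kernel \<mu> \<sigma> E z A \<partial>\<nu>))"

definition Rplus :: "(real \<Rightarrow> real) \<Rightarrow> real set" where
  "Rplus \<mu> = {x. \<mu> x > 0}"

definition fRC :: "(real \<Rightarrow> real) \<Rightarrow> real \<times> real \<Rightarrow> real" where
  "fRC \<mu> z = ln ((1 - indicator (Rplus \<mu>) (fst z))
                 + indicator (Rplus \<mu>) (fst z) * exp (snd z - fst z))"

end

theory Submission
  imports Defs
begin

theorem lemmal2p14:
  fixes \<mu> \<sigma> g :: "real \<Rightarrow> real" and E :: "real measure" and \<nu> :: "(real \<times> real) measure"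
  assumes mu_meas: "\<mu> \<in> borel_measurable borel"
    and sigma_meas: "\<sigma> \<in> borel_measurable borel"
    and A1_prob: "prob_space E"
    and A1_dens: "E = density lborel (\<lambda>x. ennreal (g x))"
    and A1_g_meas: "g \<in> borel_measurable borel"
    and A1_g_nonneg: "\<And>x. g x \<ge> 0"
    and A1_g_bounds: "\<And>K. compact K \<Longrightarrow> \<exists>c C. 0 < c \<and> (\<forall>x\<in>K. c \<le> g x \<and> g x \<le> C)"
    and A2_mu: "\<And>K. compact K \<Longrightarrow> bounded (\<mu> ` K)"
    and A2_sigma_pos: "\<And>x. \<sigma> x > 0"
    and A2_sigma_low: "\<And>K. compact K \<Longrightarrow> \<exists>c>0. \<forall>x\<in>K. \<sigma> x \<ge> c"
    and A2_sigma_bdd: "bounded (range \<sigma>)"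
    and A3: "Limsup at_infinity (\<lambda>x::real. ereal (\<bar>x + \<mu> x\<bar> / \<bar>x\<bar>)) < 1"
    and A4_exp: "\<exists>\<kappa>>0. (\<integral>\<^sup>+ e. ennreal (exp (\<kappa> * e\<^sup>2)) \<partial>E) < \<infinity>"
    and A4_mean: "(\<integral> e. e \<partial>E) = 0"
    and RC_plus: "emeasure lborel (Rplus \<mu>) > 0"
    and inv: "phi_invariant \<mu> \<sigma> E \<nu>"
  shows "integrable \<nu> (fRC \<mu>) \<and> (\<integral> z. fRC \<mu> z \<partial>\<nu>) > 0"
proof -
  interpret E: prob_space E by fact
  have nuP: "prob_space \<nu>" and sets_nu: "sets \<nu> = sets (borel :: (real \<times> real) measure)"
    and invA: "\<And>A. A \<in> sets (borel :: (real \<times> real) measure) \<Longrightarrow> emeasure \<nu> A = (\<integral>\<^sup>+ z. phi_kernel \<mu> \<sigma> E z A \<partial>\<nu>)"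
    using inv unfolding phi_invariant_def by auto
  interpret N: prob_space \<nu> by fact
  interpret P: pair_prob_space \<nu> E by unfold_locales
  note [measurable] = mu_meas sigma_meas A1_g_meas
  have sets_E: "sets E = sets borel" using A1_dens by simp
  have space_E: "space E = UNIV" using A1_dens by simp
  have space_nu: "space \<nu> = UNIV" using sets_eq_imp_space_eq[OF sets_nu] by simp
  have sets_P: "sets (\<nu> \<Otimes>\<^sub>M E) = sets (((borel::real measure) \<Otimes>\<^sub>M (borel::real measure)) \<Otimes>\<^sub>M (borel::real measure))"
    apply (intro sets_pair_measure_cong)
    using sets_nu sets_E borel_prod[where 'a=real and 'b=real] by metis+
  have mnu: "\<And>N. measurable \<nu> N = measurable ((borel::real measure) \<Otimes>\<^sub>M (borel::real measure)) N"
    apply (intro measurable_cong_sets refl)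
    using sets_nu borel_prod[where 'a=real and 'b=real] by metis
  have mE: "\<And>N. measurable E N = measurable borel N"
    by (intro measurable_cong_sets refl sets_E)
  have mP: "\<And>N. measurable (\<nu> \<Otimes>\<^sub>M E) N = measurable (((borel::real measure) \<Otimes>\<^sub>M (borel::real measure)) \<Otimes>\<^sub>M (borel::real measure)) N"
    by (intro measurable_cong_sets refl sets_P)
  have Rm[measurable]: "Rplus \<mu> \<in> sets borel"
    unfolding Rplus_def by measurable
  define F where "F \<equiv> (\<lambda>(z::real\<times>real,e::real). (snd z, snd z + \<mu> (snd z) + \<sigma> (snd z) * e))"
  have Fm: "F \<in> measurable (\<nu> \<Otimes>\<^sub>M E) borel"
    unfolding mP F_def by measurable
  have emeas_distr: "\<And>A. A \<in> sets borel \<Longrightarrow> emeasure (distr (\<nu> \<Otimes>\<^sub>M E) borel F) A = (\<integral>\<^sup>+ z. emeasure E (Pair z -` (F -` A \<inter> space (\<nu> \<Otimes>\<^sub>M E))) \<partial>\<nu>)"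
  proof -
    fix A :: "(real\<times>real) set" assume Ab: "A \<in> sets borel"
    have "emeasure (distr (\<nu> \<Otimes>\<^sub>M E) borel F) A = emeasure (\<nu> \<Otimes>\<^sub>M E) (F -` A \<inter> space (\<nu> \<Otimes>\<^sub>M E))"
      using Fm Ab by (simp add: emeasure_distr)
    also have "\<dots> = (\<integral>\<^sup>+ z. emeasure E (Pair z -` (F -` A \<inter> space (\<nu> \<Otimes>\<^sub>M E))) \<partial>\<nu>)"
      using Fm Ab by (intro E.emeasure_pair_measure_alt) (simp add: measurable_sets)
    finally show "?thesis A" .
  qed
  have emeas_nu: "\<And>A. A \<in> sets borel \<Longrightarrow> emeasure \<nu> A = (\<integral>\<^sup>+ z. emeasure E (Pair z -` (F -` A \<inter> space (\<nu> \<Otimes>\<^sub>M E))) \<partial>\<nu>)"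
  proof -
    fix A :: "(real\<times>real) set" assume Ab: "A \<in> sets borel"
    have "(\<integral>\<^sup>+ z. emeasure E (Pair z -` (F -` A \<inter> space (\<nu> \<Otimes>\<^sub>M E))) \<partial>\<nu>) = (\<integral>\<^sup>+ z. phi_kernel \<mu> \<sigma> E z A \<partial>\<nu>)"
      by (intro nn_integral_cong) (simp add: phi_kernel_def F_def space_pair_measure space_E space_nu vimage_def)
    also have "\<dots> = emeasure \<nu> A" using invA Ab by simp
    finally show "?thesis A" by simp
  qed
  have nu_eq: "\<nu> = distr (\<nu> \<Otimes>\<^sub>M E) borel F"
  proof (rule measure_eqI)
    show "sets \<nu> = sets (distr (\<nu> \<Otimes>\<^sub>M E) borel F)" using sets_nu by simp
    fix A assume A: "A \<in> sets \<nu>"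
    hence Ab: "A \<in> sets borel" using sets_nu by simp
    show "emeasure \<nu> A = emeasure (distr (\<nu> \<Otimes>\<^sub>M E) borel F) A"
      using emeas_nu[OF Ab] emeas_distr[OF Ab] by simp
  qed
  have Kint: "integrable \<nu> h \<and> (\<integral>z. h z \<partial>\<nu>) = (\<integral>z. (\<integral>e. h (F (z,e)) \<partial>E) \<partial>\<nu>)"
    if hm: "h \<in> borel_measurable borel" and hi: "integrable (\<nu> \<Otimes>\<^sub>M E) (\<lambda>p. h (F p))"
    for h :: "real \<times> real \<Rightarrow> real"
  proof
    have "integrable \<nu> h = integrable (distr (\<nu> \<Otimes>\<^sub>M E) borel F) h"
      by (rule arg_cong[of _ _ "\<lambda>M. integrable M h", OF nu_eq])
    also have "\<dots> = integrable (\<nu> \<Otimes>\<^sub>M E) (\<lambda>p. h (F p))"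
      by (rule integrable_distr_eq[OF Fm hm])
    finally show "integrable \<nu> h" using hi by simp
    have "(\<integral>z. h z \<partial>\<nu>) = (\<integral>z. h z \<partial>(distr (\<nu> \<Otimes>\<^sub>M E) borel F))"
      by (rule arg_cong[of _ _ "\<lambda>M. integral\<^sup>L M h", OF nu_eq])
    also have "\<dots> = (\<integral>p. h (F p) \<partial>(\<nu> \<Otimes>\<^sub>M E))"
      by (rule integral_distr[OF Fm hm])
    also have "\<dots> = (\<integral>z. (\<integral>e. h (F (z,e)) \<partial>E) \<partial>\<nu>)"
      using P.integral_fst'[OF hi] by simp
    finally show "(\<integral>z. h z \<partial>\<nu>) = (\<integral>z. (\<integral>e. h (F (z,e)) \<partial>E) \<partial>\<nu>)" .
  qed
  obtain \<rho> :: real where rho: "Limsup at_infinity (\<lambda>x::real. ereal (\<bar>x + \<mu> x\<bar> / \<bar>x\<bar>)) < ereal \<rho>" "\<rho> < 1" "0 \<le> \<rho>"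
  proof -
    obtain r where r: "Limsup at_infinity (\<lambda>x::real. ereal (\<bar>x + \<mu> x\<bar> / \<bar>x\<bar>)) < ereal r" "ereal r < 1"
      using ereal_dense2[OF A3] by blast
    show ?thesis
      apply (rule that[of "max r (1/2)"])
      using r by (auto simp: max_def intro: less_le_trans[OF r(1)])
  qed
  obtain Cm where Cm: "\<And>y. \<bar>y + \<mu> y\<bar> \<le> \<rho> * \<bar>y\<bar> + Cm" and Cm0: "0 \<le> Cm"
  proof -
    have "\<forall>\<^sub>F x in at_infinity. ereal (\<bar>x + \<mu> x\<bar> / \<bar>x\<bar>) < ereal \<rho>"
      by (rule Limsup_lessD[OF rho(1)])
    then obtain b where b: "\<And>x::real. b \<le> norm x \<Longrightarrow> \<bar>x + \<mu> x\<bar> / \<bar>x\<bar> < \<rho>"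
      unfolding eventually_at_infinity by auto
    define R where "R = max b 1"
    have "bounded (\<mu> ` cball 0 R)" by (rule A2_mu) simp
    then obtain M where M': "\<forall>x\<in>cball 0 R. \<bar>\<mu> x\<bar> \<le> M"
      unfolding bounded_iff by auto
    have M: "\<bar>\<mu> x\<bar> \<le> M" if "\<bar>x\<bar> \<le> R" for x using M' that by auto
    have M0: "0 \<le> M" using M[of 0] unfolding R_def by (smt (verit) abs_ge_zero)
    show ?thesis
    proof (rule that[of "R + M"])
      fix y :: real
      show "\<bar>y + \<mu> y\<bar> \<le> \<rho> * \<bar>y\<bar> + (R + M)"
      proof (cases "\<bar>y\<bar> \<le> R")
        case True
        then have "\<bar>\<mu> y\<bar> \<le> M" using M by auto
        then show ?thesis using True rho(3) by (smt (verit) mult_nonneg_nonneg abs_ge_zero)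
      next
        case False
        then have y: "b \<le> norm y" "\<bar>y\<bar> > 0" unfolding R_def by auto
        have "\<bar>y + \<mu> y\<bar> / \<bar>y\<bar> < \<rho>" using b[OF y(1)] by simp
        then have "\<bar>y + \<mu> y\<bar> < \<rho> * \<bar>y\<bar>" using y(2) by (simp add: divide_less_eq)
        then show ?thesis using M0 unfolding R_def by auto
      qed
    qed (use M0 in \<open>auto simp: R_def\<close>)
  qed
  obtain S where S: "\<And>y. \<sigma> y \<le> S"
    using A2_sigma_bdd unfolding bounded_iff by (metis abs_le_D1 real_norm_def rangeI)
  have S0: "0 \<le> S" using S[of 0] A2_sigma_pos[of 0] by linarith
  have intE: "integrable E (\<lambda>e. e)"
  proof -
    obtain \<kappa> where k: "\<kappa> > 0" "(\<integral>\<^sup>+ e. ennreal (exp (\<kappa> * e\<^sup>2)) \<partial>E) < \<infinity>" using A4_exp by blast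
    have pt: "\<bar>e\<bar> \<le> 1 + (1/\<kappa>) * exp (\<kappa> * e\<^sup>2)" for e :: real
    proof -
      have "\<bar>e\<bar> \<le> 1 + e\<^sup>2"
      proof (cases "\<bar>e\<bar> \<le> 1")
        case True then show ?thesis by (smt (verit) zero_le_power2)
      next
        case False then have "\<bar>e\<bar> * 1 \<le> \<bar>e\<bar> * \<bar>e\<bar>" by (intro mult_left_mono) auto
        then show ?thesis by (simp add: power2_eq_square abs_mult_self_eq)
      qed
      also have "e\<^sup>2 = (1/\<kappa>) * (\<kappa> * e\<^sup>2)" using k by simp
      also have "\<dots> \<le> (1/\<kappa>) * exp (\<kappa> * e\<^sup>2)"
        using k by (intro mult_left_mono) (auto intro: order_trans[OF _ exp_ge_add_one_self])
      finally show ?thesis by simp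
    qed
    have "(\<integral>\<^sup>+ e. ennreal (norm e) \<partial>E) \<le> (\<integral>\<^sup>+ e. (1 + ennreal (1/\<kappa>) * ennreal (exp (\<kappa> * e\<^sup>2))) \<partial>E)"
    proof (intro nn_integral_mono)
      fix x :: real
      have "ennreal (norm x) \<le> ennreal (1 + (1/\<kappa>) * exp (\<kappa> * x\<^sup>2))"
        using pt[of x] by (intro ennreal_leI) simp
      also have "\<dots> = 1 + ennreal (1/\<kappa>) * ennreal (exp (\<kappa> * x\<^sup>2))"
        using k(1) by (subst ennreal_plus) (auto simp: ennreal_mult[symmetric])
      finally show "ennreal (norm x) \<le> 1 + ennreal (1/\<kappa>) * ennreal (exp (\<kappa> * x\<^sup>2))" .
    qed
    also have "\<dots> = 1 + ennreal (1/\<kappa>) * (\<integral>\<^sup>+ e. ennreal (exp (\<kappa> * e\<^sup>2)) \<partial>E)"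
      by (subst nn_integral_add) (auto simp: mE nn_integral_cmult E.emeasure_space_1)
    also have "\<dots> < \<infinity>" using k(2) by (simp add: ennreal_mult_less_top)
    finally show ?thesis unfolding integrable_iff_bounded by (simp add: mE)
  qed
  define M1 where "M1 = (\<integral>e. \<bar>e\<bar> \<partial>E)"
  define C0 where "C0 = Cm + S * M1"
  have M10: "0 \<le> M1" unfolding M1_def by simp
  have C00: "0 \<le> C0" unfolding C0_def using M10 S0 Cm0 by simp
  have intT: "\<And>a b c. integrable E (\<lambda>e. a * (b + c * e))"
    using intE by simp
  have intabs: "integrable E (\<lambda>e. \<bar>e\<bar>)" using intE by simp
  have inner_bound: "(\<integral>e. \<bar>y + \<mu> y + \<sigma> y * e\<bar> \<partial>E) \<le> \<rho> * \<bar>y\<bar> + C0" for y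
  proof -
    have "(\<integral>e. \<bar>y + \<mu> y + \<sigma> y * e\<bar> \<partial>E) \<le> (\<integral>e. \<bar>y + \<mu> y\<bar> + S * \<bar>e\<bar> \<partial>E)"
    proof (rule integral_mono)
      show "integrable E (\<lambda>e. \<bar>y + \<mu> y + \<sigma> y * e\<bar>)" using intE by simp
      show "integrable E (\<lambda>e. \<bar>y + \<mu> y\<bar> + S * \<bar>e\<bar>)" using intabs by simp
      fix e
      have "\<bar>\<sigma> y * e\<bar> \<le> S * \<bar>e\<bar>" using S[of y] A2_sigma_pos[of y] by (simp add: abs_mult mult_right_mono)
      then show "\<bar>y + \<mu> y + \<sigma> y * e\<bar> \<le> \<bar>y + \<mu> y\<bar> + S * \<bar>e\<bar>" by linarith
    qed
    also have "\<dots> = \<bar>y + \<mu> y\<bar> + S * M1"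
      using intabs unfolding M1_def by (simp add: E.prob_space)
    also have "\<dots> \<le> \<rho> * \<bar>y\<bar> + C0" using Cm[of y] unfolding C0_def by simp
    finally show ?thesis .
  qed
  have mB: "\<And>N. measurable (borel::(real\<times>real) measure) N = measurable ((borel::real measure) \<Otimes>\<^sub>M (borel::real measure)) N"
    apply (intro measurable_cong_sets refl)
    using borel_prod[where 'a=real and 'b=real] by metis
  have bint: "integrable \<nu> f" if "f \<in> borel_measurable \<nu>" "\<And>z. \<bar>f z\<bar> \<le> B" for f :: "real\<times>real \<Rightarrow> real" and B
    by (rule N.integrable_const_bound[where B=B]) (use that in auto)
  have mom: "integrable \<nu> (\<lambda>z. snd z)"
  proof -
    define m1 where "m1 n z = min \<bar>snd z\<bar> (real n)" for n :: nat and z :: "real\<times>real"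
    define m2 where "m2 n z = min (\<rho> * \<bar>snd z\<bar> + C0) (real n)" for n :: nat and z :: "real\<times>real"
    define G where "G n z = m1 n z - m2 n z + C0" for n :: nat and z :: "real\<times>real"
    have m1m[measurable]: "\<And>n. m1 n \<in> borel_measurable \<nu>" unfolding mnu m1_def by measurable
    have m2m[measurable]: "\<And>n. m2 n \<in> borel_measurable \<nu>" unfolding mnu m2_def by measurable
    have Gm[measurable]: "\<And>n. G n \<in> borel_measurable \<nu>" unfolding G_def by measurable
    have m1i: "integrable \<nu> (m1 n)" for n
      by (rule bint[of _ "real n"]) (auto simp: m1_def)
    have m2i: "integrable \<nu> (m2 n)" for n
      by (rule bint[of _ "real n"]) (use C00 rho(3) in \<open>auto simp: m2_def\<close>)
    have Gi: "integrable \<nu> (G n)" for n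
      unfolding G_def[abs_def] using m1i m2i by simp
    have Gnn: "0 \<le> G n z" for n z
    proof -
      have "\<rho> * \<bar>snd z\<bar> \<le> \<bar>snd z\<bar>" using rho by (simp add: mult_left_le_one_le)
      then show ?thesis unfolding G_def m1_def m2_def min_def using C00 by auto
    qed
    have step: "(\<integral>z. m1 n z \<partial>\<nu>) \<le> (\<integral>z. m2 n z \<partial>\<nu>)" for n
    proof -
      have hm: "m1 n \<in> borel_measurable borel" unfolding mB m1_def by measurable
      have hi: "integrable (\<nu> \<Otimes>\<^sub>M E) (\<lambda>p. m1 n (F p))"
      proof (rule P.integrable_const_bound[where B="real n"])
        show "(\<lambda>p. m1 n (F p)) \<in> borel_measurable (\<nu> \<Otimes>\<^sub>M E)" unfolding mP m1_def F_def by measurable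
      qed (auto simp: m1_def)
      have "(\<integral>z. m1 n z \<partial>\<nu>) = (\<integral>z. (\<integral>e. m1 n (F (z,e)) \<partial>E) \<partial>\<nu>)"
        using Kint[OF hm hi] by simp
      also have "\<dots> \<le> (\<integral>z. m2 n z \<partial>\<nu>)"
      proof (rule integral_mono)
        show "integrable \<nu> (\<lambda>z. \<integral>e. m1 n (F (z,e)) \<partial>E)" using P.integrable_fst'[OF hi] by simp
        show "integrable \<nu> (m2 n)" by (rule m2i)
        fix z :: "real \<times> real"
        let ?T = "\<lambda>e. snd z + \<mu> (snd z) + \<sigma> (snd z) * e"
        have eq: "(\<integral>e. m1 n (F (z,e)) \<partial>E) = (\<integral>e. min \<bar>?T e\<bar> (real n) \<partial>E)" by (simp add: F_def m1_def)
        have i1: "integrable E (\<lambda>e. min \<bar>?T e\<bar> (real n))"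
          by (rule E.integrable_const_bound[where B="real n"]) (auto simp: mE)
        have "(\<integral>e. min \<bar>?T e\<bar> (real n) \<partial>E) \<le> (\<integral>e. \<bar>?T e\<bar> \<partial>E)"
          by (rule integral_mono[OF i1]) (use intE in auto)
        also have "\<dots> \<le> \<rho> * \<bar>snd z\<bar> + C0" by (rule inner_bound)
        finally have b1: "(\<integral>e. min \<bar>?T e\<bar> (real n) \<partial>E) \<le> \<rho> * \<bar>snd z\<bar> + C0" .
        have "(\<integral>e. min \<bar>?T e\<bar> (real n) \<partial>E) \<le> (\<integral>e. real n \<partial>E)"
          by (rule integral_mono[OF i1]) auto
        then have b2: "(\<integral>e. min \<bar>?T e\<bar> (real n) \<partial>E) \<le> real n" by (simp add: E.prob_space)
        show "(\<integral>e. m1 n (F (z,e)) \<partial>E) \<le> m2 n z" unfolding eq m2_def using b1 b2 by simp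
      qed
      finally show ?thesis .
    qed
    have GI: "(\<integral>z. G n z \<partial>\<nu>) \<le> C0" for n
    proof -
      have "(\<integral>z. G n z \<partial>\<nu>) = (\<integral>z. m1 n z \<partial>\<nu>) - (\<integral>z. m2 n z \<partial>\<nu>) + C0"
        unfolding G_def using m1i m2i by (simp add: N.prob_space)
      then show ?thesis using step[of n] by simp
    qed
    have lim: "liminf (\<lambda>n. ennreal (G n z)) = ennreal ((1-\<rho>) * \<bar>snd z\<bar>)" for z
    proof -
      obtain N :: nat where N: "max \<bar>snd z\<bar> (\<rho> * \<bar>snd z\<bar> + C0) \<le> real N" using real_arch_simple by blast
      have ev: "eventually (\<lambda>n. ennreal (G n z) = ennreal ((1-\<rho>) * \<bar>snd z\<bar>)) sequentially"
        unfolding eventually_sequentially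
      proof (intro exI[of _ N] allI impI)
        fix n assume "N \<le> n"
        then have "real N \<le> real n" by simp
        then show "ennreal (G n z) = ennreal ((1-\<rho>) * \<bar>snd z\<bar>)"
          using N unfolding G_def m1_def m2_def by (simp add: algebra_simps)
      qed
      have "(\<lambda>n. ennreal (G n z)) \<longlonglongrightarrow> ennreal ((1-\<rho>) * \<bar>snd z\<bar>)" by (rule tendsto_eventually[OF ev])
      then show ?thesis by (intro lim_imp_Liminf) simp_all
    qed
    have "(\<integral>\<^sup>+z. ennreal ((1-\<rho>) * \<bar>snd z\<bar>) \<partial>\<nu>) = (\<integral>\<^sup>+z. liminf (\<lambda>n. ennreal (G n z)) \<partial>\<nu>)"
      by (simp add: lim)
    also have "\<dots> \<le> liminf (\<lambda>n. \<integral>\<^sup>+z. ennreal (G n z) \<partial>\<nu>)"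
      by (rule nn_integral_liminf) simp
    also have "\<dots> \<le> ennreal C0"
    proof -
      have le: "(\<integral>\<^sup>+z. ennreal (G n z) \<partial>\<nu>) \<le> ennreal C0" for n
        using nn_integral_eq_integral[OF Gi[of n]] Gnn GI[of n] by (simp add: ennreal_leI)
      have "limsup (\<lambda>n. \<integral>\<^sup>+z. ennreal (G n z) \<partial>\<nu>) \<le> ennreal C0"
        by (intro Limsup_bounded) (simp add: le)
      then show ?thesis using Liminf_le_Limsup[of sequentially] order_trans by fastforce
    qed
    finally have fin1: "(\<integral>\<^sup>+z. ennreal ((1-\<rho>) * \<bar>snd z\<bar>) \<partial>\<nu>) \<le> ennreal C0" .
    have "(\<integral>\<^sup>+z. ennreal (norm (snd z)) \<partial>\<nu>) = (\<integral>\<^sup>+z. ennreal (1/(1-\<rho>)) * ennreal ((1-\<rho>) * \<bar>snd z\<bar>) \<partial>\<nu>)"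
      using rho(2) by (intro nn_integral_cong) (simp add: ennreal_mult[symmetric])
    also have "\<dots> = ennreal (1/(1-\<rho>)) * (\<integral>\<^sup>+z. ennreal ((1-\<rho>) * \<bar>snd z\<bar>) \<partial>\<nu>)"
      by (rule nn_integral_cmult) (simp add: mnu)
    also have "\<dots> \<le> ennreal (1/(1-\<rho>)) * ennreal C0" by (intro mult_left_mono fin1) simp
    also have "\<dots> < \<infinity>" by (simp add: ennreal_mult_less_top)
    finally show ?thesis unfolding integrable_iff_bounded by (simp add: mnu)
  qed
  have intmu: "integrable \<nu> (\<lambda>z. \<bar>\<mu> (snd z)\<bar>)"
  proof (rule Bochner_Integration.integrable_bound)
    show "integrable \<nu> (\<lambda>z. (1+\<rho>) * \<bar>snd z\<bar> + Cm)" using mom by simp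
    show "(\<lambda>z. \<bar>\<mu> (snd z)\<bar>) \<in> borel_measurable \<nu>" unfolding mnu by measurable
    show "AE z in \<nu>. norm \<bar>\<mu> (snd z)\<bar> \<le> norm ((1+\<rho>) * \<bar>snd z\<bar> + Cm)"
    proof (rule AE_I2)
      fix z :: "real \<times> real"
      have "\<bar>\<mu> (snd z)\<bar> \<le> (1+\<rho>) * \<bar>snd z\<bar> + Cm" using Cm[of "snd z"] by (simp add: algebra_simps)
      then show "norm \<bar>\<mu> (snd z)\<bar> \<le> norm ((1+\<rho>) * \<bar>snd z\<bar> + Cm)" using rho(3) Cm0 by simp
    qed
  qed
  have fRC_eq: "fRC \<mu> = (\<lambda>z. indicator (Rplus \<mu>) (fst z) * (snd z - fst z))"
    by (auto simp: fRC_def fun_eq_iff indicator_def)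
  have fm: "fRC \<mu> \<in> borel_measurable borel" unfolding fRC_eq mB by measurable
  have fF: "fRC \<mu> (F p) = indicator (Rplus \<mu>) (snd (fst p)) * (\<mu> (snd (fst p)) + \<sigma> (snd (fst p)) * snd p)" for p
    by (cases p) (simp add: fRC_eq F_def)
  define gB where "gB p = \<bar>\<mu> (snd (fst p))\<bar> + S * \<bar>snd p\<bar>" for p :: "(real\<times>real)\<times>real"
  have gBi: "integrable (\<nu> \<Otimes>\<^sub>M E) gB"
  proof (rule P.Fubini_integrable)
    show "gB \<in> borel_measurable (\<nu> \<Otimes>\<^sub>M E)" unfolding mP gB_def by measurable
    have eqI: "(\<integral>e. norm (gB (z,e)) \<partial>E) = \<bar>\<mu> (snd z)\<bar> + S*M1" for z
    proof -
      have "(\<integral>e. norm (gB (z,e)) \<partial>E) = (\<integral>e. \<bar>\<mu> (snd z)\<bar> + S * \<bar>e\<bar> \<partial>E)"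
        using S0 by (intro Bochner_Integration.integral_cong refl) (simp add: gB_def)
      also have "\<dots> = \<bar>\<mu> (snd z)\<bar> + S*M1" using intabs unfolding M1_def by (simp add: E.prob_space)
      finally show ?thesis .
    qed
    show "integrable \<nu> (\<lambda>z. \<integral>e. norm (gB (z,e)) \<partial>E)"
      unfolding eqI using intmu by simp
    show "AE z in \<nu>. integrable E (\<lambda>e. gB (z,e))" using intabs by (simp add: gB_def)
  qed
  have fFi: "integrable (\<nu> \<Otimes>\<^sub>M E) (\<lambda>p. fRC \<mu> (F p))"
  proof (rule Bochner_Integration.integrable_bound[OF gBi])
    show "(\<lambda>p. fRC \<mu> (F p)) \<in> borel_measurable (\<nu> \<Otimes>\<^sub>M E)" using fm Fm by measurable
    show "AE p in \<nu> \<Otimes>\<^sub>M E. norm (fRC \<mu> (F p)) \<le> norm (gB p)"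
    proof (rule AE_I2)
      fix p :: "(real\<times>real)\<times>real"
      have a: "\<bar>\<sigma> (snd (fst p)) * snd p\<bar> \<le> S * \<bar>snd p\<bar>"
        using S[of "snd (fst p)"] A2_sigma_pos[of "snd (fst p)"] by (simp add: abs_mult mult_right_mono)
      have "\<bar>\<mu> (snd (fst p)) + \<sigma> (snd (fst p)) * snd p\<bar> \<le> gB p" unfolding gB_def using a by linarith
      moreover have "0 \<le> gB p" unfolding gB_def using S0 by simp
      ultimately show "norm (fRC \<mu> (F p)) \<le> norm (gB p)"
        unfolding fF by (auto simp: indicator_def)
    qed
  qed
  have fi: "integrable \<nu> (fRC \<mu>)" and fv: "(\<integral>z. fRC \<mu> z \<partial>\<nu>) = (\<integral>z. (\<integral>e. fRC \<mu> (F (z,e)) \<partial>E) \<partial>\<nu>)"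
    using Kint[OF fm fFi] by auto
  have lin: "(\<integral>e. c * (a + b * e) \<partial>E) = c * a" for a b c :: real
  proof -
    have "(\<integral>e. c * (a + b * e) \<partial>E) = c * (\<integral>e. a + b * e \<partial>E)" by simp
    also have "(\<integral>e. a + b * e \<partial>E) = (\<integral>e. a \<partial>E) + (\<integral>e. b * e \<partial>E)"
      using intE by (intro Bochner_Integration.integral_add) auto
    also have "\<dots> = a" using A4_mean by (simp add: E.prob_space)
    finally show ?thesis .
  qed
  let ?q = "\<lambda>z. indicator (Rplus \<mu>) (snd z) * \<mu> (snd z)"
  have fv2: "(\<integral>z. fRC \<mu> z \<partial>\<nu>) = (\<integral>z. ?q z \<partial>\<nu>)"
    unfolding fv by (intro Bochner_Integration.integral_cong refl) (simp only: fF fst_conv snd_conv lin)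
  have gpos: "g x > 0" for x
  proof -
    obtain c C where "0 < c" "\<forall>y\<in>{x}. c \<le> g y \<and> g y \<le> C" using A1_g_bounds[of "{x}"] by auto
    then show ?thesis by auto
  qed
  have posE: "emeasure E {e. t + s*e \<in> Rplus \<mu>} > 0" if s: "s > 0" for t s :: real
  proof (rule ccontr)
    let ?X = "{e. t + s*e \<in> Rplus \<mu>}"
    have Xm: "?X \<in> sets borel" by measurable
    assume "\<not> emeasure E ?X > 0"
    then have 0: "emeasure E ?X = 0" by (simp add: not_gr_zero)
    have "emeasure E ?X = (\<integral>\<^sup>+e. ennreal (g e) * indicator ?X e \<partial>lborel)"
      unfolding A1_dens using Xm by (subst emeasure_density) auto
    with 0 have "AE e in lborel. ennreal (g e) * indicator ?X e = 0"
      by (subst nn_integral_0_iff_AE[symmetric]) auto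
    then have "AE e in lborel. \<not> (t + s*e \<in> Rplus \<mu>)"
    proof (rule eventually_mono)
      fix e assume h: "ennreal (g e) * indicator ?X e = 0"
      have "ennreal (g e) \<noteq> 0" using gpos[of e] by simp
      then show "\<not> (t + s*e \<in> Rplus \<mu>)" using h by (auto simp: indicator_def)
    qed
    moreover have pr: "Measurable.pred borel (\<lambda>e. \<not> (t + s*e \<in> Rplus \<mu>))" by measurable
    ultimately have "AE x in lborel. \<not> (t + s*(-t/s + (1/s)*x) \<in> Rplus \<mu>)"
      using AE_borel_affine[where c="1/s" and P="\<lambda>e. \<not> (t + s*e \<in> Rplus \<mu>)" and t="-t/s"] s by auto
    then have "AE x in lborel. x \<notin> Rplus \<mu>" using s by (simp add: field_simps)
    then have "emeasure lborel (Rplus \<mu>) = 0"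
      using AE_iff_measurable[of "Rplus \<mu>" lborel "\<lambda>x. x \<notin> Rplus \<mu>"] by simp
    with RC_plus show False by simp
  qed
  define B where "B = {z::real\<times>real. snd z \<in> Rplus \<mu>}"
  have Bm: "B \<in> sets borel"
  proof -
    have "(\<lambda>z::real\<times>real. snd z) \<in> borel_measurable borel" unfolding mB by measurable
    from measurable_sets[OF this Rm] show ?thesis by (simp add: B_def vimage_def)
  qed
  have nuB: "emeasure \<nu> B > 0"
  proof -
    have Q: "F -` B \<inter> space (\<nu> \<Otimes>\<^sub>M E) \<in> sets (\<nu> \<Otimes>\<^sub>M E)" using Fm Bm by (rule measurable_sets)
    have sec: "Pair z -` (F -` B \<inter> space (\<nu> \<Otimes>\<^sub>M E)) = {e. snd z + \<mu> (snd z) + \<sigma> (snd z) * e \<in> Rplus \<mu>}" for z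
      by (auto simp: B_def F_def space_pair_measure space_nu space_E)
    have eq: "emeasure \<nu> B = (\<integral>\<^sup>+z. emeasure E {e. snd z + \<mu> (snd z) + \<sigma> (snd z) * e \<in> Rplus \<mu>} \<partial>\<nu>)"
      using emeas_nu[OF Bm] by (simp only: sec)
    have "(\<integral>\<^sup>+z. emeasure E {e. snd z + \<mu> (snd z) + \<sigma> (snd z) * e \<in> Rplus \<mu>} \<partial>\<nu>) \<noteq> 0"
    proof
      assume a: "(\<integral>\<^sup>+z. emeasure E {e. snd z + \<mu> (snd z) + \<sigma> (snd z) * e \<in> Rplus \<mu>} \<partial>\<nu>) = 0"
      have "(\<lambda>z. emeasure E {e. snd z + \<mu> (snd z) + \<sigma> (snd z) * e \<in> Rplus \<mu>}) \<in> borel_measurable \<nu>"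
        using E.measurable_emeasure_Pair[OF Q] by (simp only: sec)
      with a have "AE z in \<nu>. emeasure E {e. snd z + \<mu> (snd z) + \<sigma> (snd z) * e \<in> Rplus \<mu>} = 0"
        using nn_integral_0_iff_AE by auto
      then have "AE z in \<nu>. False"
      proof (rule eventually_mono)
        fix z assume "emeasure E {e. snd z + \<mu> (snd z) + \<sigma> (snd z) * e \<in> Rplus \<mu>} = 0"
        with posE[OF A2_sigma_pos[of "snd z"], of "snd z + \<mu> (snd z)"] show False by simp
      qed
      then show False by (simp add: N.AE_False)
    qed
    then show ?thesis using eq by (simp add: zero_less_iff_neq_zero)
  qed
  have qi: "integrable \<nu> ?q"
  proof (rule Bochner_Integration.integrable_bound[OF intmu])
    show "?q \<in> borel_measurable \<nu>" unfolding mnu by measurable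
  qed (auto simp: indicator_def)
  have qnn: "AE z in \<nu>. 0 \<le> ?q z" by (auto simp: indicator_def Rplus_def)
  have "(\<integral>z. ?q z \<partial>\<nu>) > 0"
  proof (rule ccontr)
    assume "\<not> (\<integral>z. ?q z \<partial>\<nu>) > 0"
    moreover have "0 \<le> (\<integral>z. ?q z \<partial>\<nu>)" by (rule integral_nonneg_AE[OF qnn])
    ultimately have "(\<integral>z. ?q z \<partial>\<nu>) = 0" by simp
    then have "AE z in \<nu>. ?q z = 0" using integral_nonneg_eq_0_iff_AE[OF qi qnn] by simp
    then have "AE z in \<nu>. z \<notin> B"
      by (rule eventually_mono) (auto simp: B_def indicator_def Rplus_def)
    then have "emeasure \<nu> B = 0"
      using AE_iff_measurable[of B \<nu> "\<lambda>z. z \<notin> B"] Bm sets_nu space_nu by auto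
    with nuB show False by simp
  qed
  then show ?thesis using fi fv2 by simp
qed
end
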